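(* Let $R>0$ and let $K\subset\mathbb{R}^2$ be the closed disk of radius $R$ centered at the origin. Let $G\colon\mathbb{R}\to\mathbb{R}$ be twice continuously differentiable with $x^2+G(x)^2>0$ for all $x$, and define $$h(x)=x-\frac{\sqrt{x^2+G(x)^2}-R}{\sqrt{x^2+G(x)^2}}\cdot\frac{x\,(1-G'(x)^2)+2G(x)G'(x)}{1+G'(x)^2}.$$ Suppose $h$ is a bijection from $\mathbb{R}$ onto an open interval $J$ (possibly unbounded) containing $0$, with $h'(x)\ne0$ for all $x$. Then $G$ is an equidistant function (i.e. there is an admissible $f$ such that the equidistant set of $K$ and the epigraph of $f$ is the graph of $G$) if and only if the pair $x(t):=h^{-1}(t)$, $y(t):=G(x(t))$ ($t\in J$) is the equidistant parameterization for the graph of $G$, i.e. there is an admissible $f$ with $D_f=J$ and $x=x_f$, $y=y_f$ on $J$.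
   Context: $d(p,A)=\inf\{|p-q|\mid q\in A\}$ (Euclidean distance). A function $f\colon\mathbb{R}\to(0,\infty)$ is admissible if it is twice continuously differentiable, convex, and $t^2+f(t)^2>R^2$ for all $t$; its epigraph is $L_f=\{(t,y)\mid f(t)\le y\}$, and the equidistant set is $\{K=L_f\}=\{p\mid d(p,K)=d(p,L_f)\}$. For admissible $f$ put $\alpha_f(t)=\frac{tf'(t)-f(t)}{\sqrt{1+f'(t)^2}}$, $D_f=\{t\mid\alpha_f(t)<R\}$, and the equidistant parameterization $x_f,y_f\colon D_f\to\mathbb{R}$, $x_f(t)=t+\frac{f'(t)}{2\sqrt{1+f'(t)^2}}\cdot\frac{t^2+f(t)^2-R^2}{R-\alpha_f(t)}$, $y_f(t)=f(t)-\frac{1}{2\sqrt{1+f'(t)^2}}\cdot\frac{t^2+f(t)^2-R^2}{R-\alpha_f(t)}$. *)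

theory Defs
  imports "HOL-Analysis.Analysis"
begin

text \<open>Points of the plane are pairs of reals; the product norm on real \<times> real is
  the Euclidean norm, so infdist is the Euclidean distance to a set.\<close>

definition C2 :: "(real \<Rightarrow> real) \<Rightarrow> bool" where
  "C2 f \<longleftrightarrow> (\<forall>t. f differentiable (at t)) \<and> (\<forall>t. deriv f differentiable (at t))
      \<and> continuous_on UNIV (deriv (deriv f))"

definition admissible :: "real \<Rightarrow> (real \<Rightarrow> real) \<Rightarrow> bool" where
  "admissible R f \<longleftrightarrow> C2 f \<and> convex_on UNIV f \<and> (\<forall>t. f t > 0)
      \<and> (\<forall>t. t\<^sup>2 + (f t)\<^sup>2 > R\<^sup>2)"

definition epigraph :: "(real \<Rightarrow> real) \<Rightarrow> (real \<times> real) set" where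
  "epigraph f = {(t, y). f t \<le> y}"

definition equidistant_set :: "(real \<times> real) set \<Rightarrow> (real \<times> real) set \<Rightarrow> (real \<times> real) set" where
  "equidistant_set K L = {p. infdist p K = infdist p L}"

definition disk :: "real \<Rightarrow> (real \<times> real) set" where
  "disk R = cball (0, 0) R"

definition alpha :: "(real \<Rightarrow> real) \<Rightarrow> real \<Rightarrow> real" where
  "alpha f t = (t * deriv f t - f t) / sqrt (1 + (deriv f t)\<^sup>2)"

definition Dom :: "real \<Rightarrow> (real \<Rightarrow> real) \<Rightarrow> real set" where
  "Dom R f = {t. alpha f t < R}"

definition xpar :: "real \<Rightarrow> (real \<Rightarrow> real) \<Rightarrow> real \<Rightarrow> real" where
  "xpar R f t = t + deriv f t / (2 * sqrt (1 + (deriv f t)\<^sup>2))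
      * ((t\<^sup>2 + (f t)\<^sup>2 - R\<^sup>2) / (R - alpha f t))"

definition ypar :: "real \<Rightarrow> (real \<Rightarrow> real) \<Rightarrow> real \<Rightarrow> real" where
  "ypar R f t = f t - 1 / (2 * sqrt (1 + (deriv f t)\<^sup>2))
      * ((t\<^sup>2 + (f t)\<^sup>2 - R\<^sup>2) / (R - alpha f t))"

definition graph :: "(real \<Rightarrow> real) \<Rightarrow> (real \<times> real) set" where
  "graph G = {(x, G x) | x. True}"

definition equidistant_function :: "real \<Rightarrow> (real \<Rightarrow> real) \<Rightarrow> bool" where
  "equidistant_function R G \<longleftrightarrow>
     (\<exists>f. admissible R f \<and> equidistant_set (disk R) (epigraph f) = graph G)"

definition hfun :: "real \<Rightarrow> (real \<Rightarrow> real) \<Rightarrow> real \<Rightarrow> real" where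
  "hfun R G x = x - (sqrt (x\<^sup>2 + (G x)\<^sup>2) - R) / sqrt (x\<^sup>2 + (G x)\<^sup>2)
      * ((x * (1 - (deriv G x)\<^sup>2) + 2 * G x * deriv G x) / (1 + (deriv G x)\<^sup>2))"

end

theory Submission
  imports Defs
begin


lemma adm_deriv:
  assumes "admissible R f" shows "(f has_real_derivative deriv f t) (at t)"
  using assms unfolding admissible_def C2_def
  by (simp add: DERIV_deriv_iff_real_differentiable)

lemma adm_cont:
  assumes "admissible R f" shows "continuous_on UNIV f"
  using adm_deriv[OF assms]
  by (meson DERIV_isCont continuous_at_imp_continuous_on)

lemma adm_tangent:
  assumes "admissible R f" shows "f u \<ge> f t + deriv f t * (u - t)"
proof -
  have "f u - f t \<ge> deriv f t * (u - t)"
    apply (rule convex_on_imp_above_tangent[where A=UNIV])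
    using assms adm_deriv[OF assms] unfolding admissible_def by auto
  then show ?thesis by simp
qed

lemma epi_closed:
  assumes "admissible R f" shows "closed (epigraph f)"
proof -
  have "epigraph f = {p. f (fst p) \<le> snd p}" unfolding epigraph_def by auto
  moreover have "closed {p. f (fst p) \<le> snd p}"
    apply (rule closed_Collect_le)
    using adm_cont[OF assms]
    by (auto intro!: continuous_intros continuous_on_compose2[of UNIV f])
  ultimately show ?thesis by simp
qed

lemma epi_convex:
  assumes "admissible R f" shows "convex (epigraph f)"
  unfolding convex_def epigraph_def
proof (clarsimp)
  fix a b c d u v :: real
  assume h: "f a \<le> b" "f c \<le> d" "0 \<le> u" "0 \<le> v" "u + v = 1"
  have cv: "convex_on UNIV f" using assms unfolding admissible_def by auto
  have "f ((1 - v) *\<^sub>R a + v *\<^sub>R c) \<le> (1 - v) * f a + v * f c"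
    using convex_onD[OF cv, of v a c] h by auto
  also have "\<dots> \<le> u * b + v * d" using h
    by (smt (verit) mult_left_mono)
  finally have "f ((1 - v) * a + v * c) \<le> u * b + v * d" by simp
  moreover have "u = 1 - v" using h by simp
  ultimately show "f (u * a + v * c) \<le> u * b + v * d" by simp
qed

lemma infdist_lower:
  assumes "A \<noteq> {}" "\<And>a. a \<in> A \<Longrightarrow> c \<le> dist x a" shows "c \<le> infdist x A"
  using assms by (simp add: infdist_notempty cINF_greatest)

lemma infdist_cball_ge:
  fixes p :: "real \<times> real"
  assumes "R \<ge> 0" shows "norm p - R \<le> infdist p (cball 0 R)"
proof (rule infdist_lower)
  show "cball 0 R \<noteq> {}" using assms by auto
  fix a assume "a \<in> cball (0::real\<times>real) R"
  then have "norm a \<le> R" by auto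
  then show "norm p - R \<le> dist p a"
    using norm_triangle_ineq2[of p a] by (simp add: dist_norm)
qed

lemma infdist_cball_eq:
  fixes p :: "real \<times> real"
  assumes "R \<ge> 0" "norm p \<ge> R" shows "infdist p (cball 0 R) = norm p - R"
proof (rule antisym)
  show "norm p - R \<le> infdist p (cball 0 R)" using infdist_cball_ge assms by auto
  show "infdist p (cball 0 R) \<le> norm p - R"
  proof (cases "p = 0")
    case True then show ?thesis using assms by auto
  next
    case False
    define c where "c = R / norm p"
    have c: "0 \<le> c" "c \<le> 1" using assms False by (auto simp: c_def)
    have "c *\<^sub>R p \<in> cball 0 R" using False assms by (simp add: c_def)
    moreover have "dist p (c *\<^sub>R p) = norm p - R"
    proof -
      have "dist p (c *\<^sub>R p) = norm ((1 - c) *\<^sub>R p)" by (simp add: dist_norm algebra_simps)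
      also have "\<dots> = (1 - c) * norm p" using c by simp
      also have "\<dots> = norm p - R" using False by (simp add: c_def algebra_simps)
      finally show ?thesis .
    qed
    ultimately show ?thesis by (metis infdist_le)
  qed
qed

lemma norm_pair: "norm (a::real, b::real) = sqrt (a^2 + b^2)"
  by (simp add: norm_Pair)

lemma dist_pair: "dist (a::real, b::real) (c, e) = sqrt ((a - c)^2 + (b - e)^2)"
  by (simp add: dist_Pair_Pair dist_real_def)

lemma param_norm2:
  fixes t y d s w :: real
  assumes "w = sqrt (1 + d^2)"
  shows "(t + s*d/w)^2 + (y - s/w)^2 = t^2 + y^2 + 2 * s * ((t * d - y) / w) + s^2"
proof -
  have w2: "w^2 = 1 + d^2" using assms by simp
  have wp: "w > 0" using assms by (simp add: add_pos_nonneg)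
  have "(t + s*d/w)^2 + (y - s/w)^2 = t^2 + y^2 + 2 * s * ((t * d - y) / w) + s^2 * (1 + d^2) / w^2"
    using wp by (simp add: field_simps power2_eq_square)
  also have "\<dots> = t^2 + y^2 + 2 * s * ((t * d - y) / w) + s^2" using w2 wp
    by (metis add_pos_nonneg nonzero_mult_div_cancel_right power2_less_0 zero_less_one not_le)
  finally show ?thesis .
qed

lemma paramA:
  assumes adm: "admissible R f" and R: "R > 0" and tD: "alpha f t < R"
  defines "d \<equiv> deriv f t"
  defines "w \<equiv> sqrt (1 + d^2)"
  defines "s \<equiv> (t^2 + (f t)^2 - R^2) / (2 * (R - alpha f t))"
  shows "s > 0" "xpar R f t = t + s*d/w" "ypar R f t = f t - s/w"
    "norm (xpar R f t, ypar R f t) = R + s"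
    "infdist (xpar R f t, ypar R f t) (disk R) = s"
    "infdist (xpar R f t, ypar R f t) (epigraph f) = s"
proof -
  have wp: "w > 0" unfolding w_def by (simp add: add_pos_nonneg)
  have w2: "w^2 = 1 + d^2" unfolding w_def by simp
  have dp: "1 + d^2 > 0" by (smt (verit) zero_le_power2)
  have al: "alpha f t = (t*d - f t)/w" unfolding alpha_def d_def w_def by simp
  have big: "t^2 + (f t)^2 > R^2" using adm unfolding admissible_def by auto
  show sp: "s > 0" unfolding s_def using big tD by (simp add: divide_pos_pos)
  show xp: "xpar R f t = t + s*d/w" unfolding xpar_def s_def d_def w_def by (simp add: field_simps)
  show yp: "ypar R f t = f t - s/w" unfolding ypar_def s_def d_def w_def by (simp add: field_simps)
  have "norm (xpar R f t, ypar R f t) = sqrt ((t + s*d/w)^2 + (f t - s/w)^2)"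
    unfolding xp yp norm_pair ..
  also have "(t + s*d/w)^2 + (f t - s/w)^2 = t^2 + (f t)^2 + 2 * s * alpha f t + s^2"
    using param_norm2[OF meta_eq_to_obj_eq[OF w_def]] al by simp
  also have "t^2 + (f t)^2 + 2 * s * alpha f t + s^2 = (R + s)^2"
  proof -
    have "t^2 + (f t)^2 - R^2 = 2 * s * (R - alpha f t)" unfolding s_def using tD by (simp add: field_simps)
    then show ?thesis by (simp add: power2_eq_square algebra_simps)
  qed
  finally show nrm: "norm (xpar R f t, ypar R f t) = R + s" using sp R by simp
  show "infdist (xpar R f t, ypar R f t) (disk R) = s"
    unfolding disk_def using infdist_cball_eq[of R "(xpar R f t, ypar R f t)"] nrm R sp
    by (simp add: zero_prod_def)
  show "infdist (xpar R f t, ypar R f t) (epigraph f) = s"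
  proof (rule antisym)
    have "(t, f t) \<in> epigraph f" unfolding epigraph_def by simp
    moreover have "dist (xpar R f t, ypar R f t) (t, f t) = s"
    proof -
      have "dist (xpar R f t, ypar R f t) (t, f t) = sqrt ((s*d/w)^2 + (s/w)^2)"
        unfolding xp yp dist_pair by simp
      also have "(s*d/w)^2 + (s/w)^2 = s^2 * (1 + d^2) / w^2"
        using wp by (simp add: field_simps power2_eq_square)
      also have "\<dots> = s^2" using w2 wp dp by simp
      finally show ?thesis using sp by simp
    qed
    ultimately show "infdist (xpar R f t, ypar R f t) (epigraph f) \<le> s" by (metis infdist_le)
  next
    show "s \<le> infdist (xpar R f t, ypar R f t) (epigraph f)"
    proof (rule infdist_lower)
      show "epigraph f \<noteq> {}" unfolding epigraph_def by auto
      fix z assume "z \<in> epigraph f"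
      then obtain u v where z: "z = (u, v)" "f u \<le> v" unfolding epigraph_def by auto
      define X where "X = t + s*d/w - u"
      define Y where "Y = f t - s/w - v"
      have tan: "f u \<ge> f t + d * (u - t)" unfolding d_def by (rule adm_tangent[OF adm])
      have "X*d - Y = (t-u)*d - f t + v + s * ((1 + d^2)/w)"
        unfolding X_def Y_def using wp by (simp add: field_simps power2_eq_square)
      also have "(1 + d^2)/w = w" using w2 wp by (simp add: field_simps power2_eq_square)
      finally have "X*d - Y \<ge> s*w" using tan z by (simp add: algebra_simps)
      moreover have "s * w \<ge> 0" using sp wp by simp
      ultimately have "(X*d - Y)^2 \<ge> (s*w)^2" by (simp add: power_mono)
      then have c1: "(s*w)^2 \<le> (X*d - Y)^2" .
      have "s^2 * (1 + d^2) = (s*w)^2" using w2 by (simp add: power_mult_distrib)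
      also have "\<dots> \<le> (X*d - Y)^2" by (rule c1)
      also have "\<dots> \<le> (X*d - Y)^2 + (X + Y*d)^2" by simp
      also have "\<dots> = (X^2 + Y^2) * (1 + d^2)"
        by (simp add: power2_eq_square algebra_simps)
      finally have "s^2 * (1 + d^2) \<le> (X^2 + Y^2) * (1 + d^2)" .
      then have "X^2 + Y^2 \<ge> s^2" using dp by (simp add: mult_le_cancel_right_pos)
      then have "s \<le> sqrt (X^2 + Y^2)" using sp by (simp add: real_le_rsqrt)
      then show "s \<le> dist (xpar R f t, ypar R f t) z"
        unfolding z xp yp dist_pair X_def Y_def by simp
    qed
  qed
qed

lemma epi_disk_disjoint:
  assumes adm: "admissible R f" and "p \<in> epigraph f" shows "p \<notin> disk R"
proof
  assume pd: "p \<in> disk R"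
  obtain a b where p: "p = (a, b)" by fastforce
  have fb: "f a \<le> b" using assms p unfolding epigraph_def by auto
  have fpos: "f a > 0" "a^2 + (f a)^2 > R^2" using adm unfolding admissible_def by auto
  have "(f a)^2 \<le> b^2" using fb fpos by (simp add: power_mono)
  moreover have "sqrt (a^2 + b^2) \<le> R" using pd p unfolding disk_def
    by (simp add: dist_pair zero_prod_def)
  then have "(sqrt (a^2 + b^2))^2 \<le> R^2" by (rule power_mono) simp
  then have "a^2 + b^2 \<le> R^2" by (metis real_sqrt_pow2 sum_power2_ge_zero)
  ultimately show False using fpos by linarith
qed

lemma paramB:
  assumes adm: "admissible R f" and R: "R > 0"
    and pE: "p \<in> equidistant_set (disk R) (epigraph f)"
  shows "\<exists>t. alpha f t < R \<and> p = (xpar R f t, ypar R f t)"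
proof -
  let ?L = "epigraph f" and ?K = "disk R"
  have Lc: "closed ?L" by (rule epi_closed[OF adm])
  have Lv: "convex ?L" by (rule epi_convex[OF adm])
  have Ln: "?L \<noteq> {}" unfolding epigraph_def by auto
  have Kc: "closed ?K" unfolding disk_def by simp
  have Kn: "?K \<noteq> {}" unfolding disk_def using R by auto
  have eq: "infdist p ?K = infdist p ?L" using pE unfolding equidistant_set_def by auto
  have pL: "p \<notin> ?L"
  proof
    assume "p \<in> ?L"
    then have "infdist p ?K = 0" using eq by simp
    then have "p \<in> ?K" using in_closed_iff_infdist_zero[OF Kc Kn] by simp
    then show False using epi_disk_disjoint[OF adm \<open>p \<in> ?L\<close>] by simp
  qed
  obtain a b where p: "p = (a, b)" by fastforce
  define q where "q = closest_point ?L p"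
  have qL: "q \<in> ?L" unfolding q_def using closest_point_in_set[OF Lc Ln] .
  obtain t y0 where q: "q = (t, y0)" by fastforce
  have fy0: "f t \<le> y0" using qL q unfolding epigraph_def by auto
  have dot: "(a - t) * (u - t) + (b - y0) * (v - y0) \<le> 0" if "f u \<le> v" for u v
  proof -
    have "(u, v) \<in> ?L" using that unfolding epigraph_def by auto
    from closest_point_dot[OF Lv Lc this, of p]
    have "inner (p - q) ((u, v) - q) \<le> 0" unfolding q_def .
    then show ?thesis unfolding q p by simp
  qed
  have by0: "b \<le> y0" using dot[of t "y0 + 1"] fy0 by simp
  have y0f: "y0 = f t"
  proof (rule ccontr)
    assume "y0 \<noteq> f t"
    then have lt: "f t < y0" using fy0 by simp
    have "(b - y0) * (f t - y0) \<le> 0" using dot[of t "f t"] by simp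
    then have "b \<ge> y0" using lt by (simp add: mult_le_0_iff)
    then have b: "b = y0" using by0 by simp
    have "(a - t) * (a - t) \<le> 0" using dot[of a "max y0 (f a)"] b by simp
    then have "a = t" by (simp add: mult_le_0_iff) linarith
    then have "p = q" using p q b by simp
    then show False using pL qL by simp
  qed
  define d where "d = deriv f t"
  define w where "w = sqrt (1 + d^2)"
  have wp: "w > 0" unfolding w_def by (simp add: add_pos_nonneg)
  have w2: "w^2 = 1 + d^2" unfolding w_def by simp
  have dp: "1 + d^2 > 0" by (smt (verit) zero_le_power2)
  define g where "g u = (a - t) * (u - t) + (b - f t) * (f u - f t)" for u
  have gd: "(g has_real_derivative ((a - t) + (b - f t) * d)) (at t)"
    unfolding g_def d_def
    by (auto intro!: derivative_eq_intros adm_deriv[OF adm])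
  have "(a - t) + (b - f t) * d = 0"
    apply (rule DERIV_local_max[OF gd, of 1])
    using dot y0f unfolding g_def by auto
  then have a_eq: "a = t + (f t - b) * d" by (simp add: algebra_simps)
  define \<sigma> where "\<sigma> = f t - b"
  have sg0: "\<sigma> \<ge> 0" unfolding \<sigma>_def using by0 y0f by simp
  have sgp: "\<sigma> > 0"
  proof (rule ccontr)
    assume "\<not> \<sigma> > 0"
    then have "\<sigma> = 0" using sg0 by simp
    then have "p = q" using a_eq p q y0f unfolding \<sigma>_def by simp
    then show False using pL qL by simp
  qed
  define s where "s = \<sigma> * w"
  have sp: "s > 0" unfolding s_def using sgp wp by simp
  have a2: "a = t + s * d / w" unfolding s_def \<sigma>_def using a_eq wp by simp
  have b2: "b = f t - s / w" unfolding s_def \<sigma>_def using wp by simp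
  have dpq: "dist p q = s"
  proof -
    have e1: "a - t = \<sigma> * d" "b - f t = - \<sigma>" using a_eq unfolding \<sigma>_def by simp_all
    have "dist p q = sqrt ((a - t)^2 + (b - f t)^2)"
      unfolding p q dist_pair y0f[symmetric] ..
    also have "\<dots> = sqrt ((\<sigma> * d)^2 + \<sigma>^2)" unfolding e1 by simp
    also have "(\<sigma> * d)^2 + \<sigma>^2 = (\<sigma> * w)^2"
      using w2 by (simp add: power_mult_distrib algebra_simps)
    finally show ?thesis unfolding s_def using sgp wp by simp
  qed
  have iL: "infdist p ?L = s"
  proof (rule antisym)
    show "infdist p ?L \<le> s" using infdist_le[OF qL, of p] dpq by simp
    show "s \<le> infdist p ?L"
      apply (rule infdist_lower[OF Ln])
      using closest_point_le[OF Lc, of _ p] dpq unfolding q_def by auto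
  qed
  then have iK: "infdist p ?K = s" using eq by simp
  have "p \<notin> ?K" using iK sp in_closed_iff_infdist_zero[OF Kc Kn] by auto
  moreover have "(0::real, 0::real) = 0" by (simp add: zero_prod_def)
  ultimately have nR: "norm p \<ge> R" unfolding disk_def by (simp add: dist_norm)
  have np: "norm p = R + s"
    using infdist_cball_eq[of R p] nR R iK unfolding disk_def by (simp add: zero_prod_def)
  have al: "alpha f t = (t*d - f t)/w" unfolding alpha_def d_def w_def by simp
  have sq: "sqrt ((t + s*d/w)^2 + (f t - s/w)^2) = R + s"
    using np p a2 b2 by (simp add: norm_pair)
  have "(R + s)^2 = (t + s*d/w)^2 + (f t - s/w)^2"
    unfolding sq[symmetric] by (rule real_sqrt_pow2) simp
  also have "\<dots> = t^2 + (f t)^2 + 2 * s * alpha f t + s^2"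
    using param_norm2[OF w_def] al by simp
  finally have key: "t^2 + (f t)^2 - R^2 = 2 * s * (R - alpha f t)"
    by (simp add: power2_eq_square algebra_simps)
  have big: "t^2 + (f t)^2 > R^2" using adm unfolding admissible_def by auto
  have tD: "alpha f t < R"
  proof (rule ccontr)
    assume "\<not> alpha f t < R"
    then have "2 * s * (R - alpha f t) \<le> 0" using sp by (simp add: mult_nonneg_nonpos)
    then show False using key big by linarith
  qed
  have sdef: "s = (t^2 + (f t)^2 - R^2) / (2 * (R - alpha f t))"
    using key tD by (simp add: field_simps)
  have "xpar R f t = a" "ypar R f t = b"
    using paramA(2,3)[OF adm R tD] a2 b2 sdef unfolding d_def w_def by simp_all
  then show ?thesis using tD p by auto
qed



lemma refl_alg:
  fixes a1 a2 n1 n2 g :: real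
  assumes "a1^2 + a2^2 = 1" "n1^2 + n2^2 = 1" "a1 + g*a2 = n1 + g*n2" "\<not> (a1 = n1 \<and> a2 = n2)"
  shows "n1 = (a1*(1 - g^2) + 2*g*a2) / (1 + g^2)"
proof -
  define P where "P = a1 + g*a2"
  define A where "A = a2 - g*a1"
  define B where "B = n2 - g*n1"
  have gp: "1 + g^2 > 0" by (smt (verit) zero_le_power2)
  have e1: "(1 + g^2) * (a1^2 + a2^2) = P^2 + A^2" unfolding P_def A_def by (simp add: power2_eq_square algebra_simps)
  have e2: "(1 + g^2) * (n1^2 + n2^2) = P^2 + B^2" unfolding P_def B_def using assms(3) by (simp add: power2_eq_square algebra_simps)
  have "A^2 = B^2" using e1 e2 assms(1,2) by simp
  then have AB: "A = B \<or> A = - B" by (simp add: power2_eq_iff)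
  have ra1: "a1 * (1 + g^2) = P - g*A" "a2 * (1 + g^2) = g*P + A" unfolding P_def A_def by (simp_all add: power2_eq_square algebra_simps)
  have rn1: "n1 * (1 + g^2) = P - g*B" "n2 * (1 + g^2) = g*P + B" unfolding P_def B_def using assms(3) by (simp_all add: power2_eq_square algebra_simps)
  have "A \<noteq> B"
  proof
    assume "A = B"
    then have "a1 * (1 + g^2) = n1 * (1 + g^2)" "a2 * (1 + g^2) = n2 * (1 + g^2)" using ra1 rn1 by simp_all
    then have "a1 = n1" "a2 = n2" using gp by simp_all
    then show False using assms(4) by simp
  qed
  then have "B = - A" using AB by simp
  then have "n1 * (1 + g^2) = P + g*A" using rn1(1) by simp
  also have "P + g*A = a1*(1 - g^2) + 2*g*a2" unfolding P_def A_def by (simp add: power2_eq_square algebra_simps)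
  finally have "n1 * (1 + g^2) = a1*(1 - g^2) + 2*g*a2" .
  then show ?thesis using gp by (simp add: field_simps)
qed

lemma sqrt_deriv:
  assumes "(F has_real_derivative F') (at x)" "F x > 0"
  shows "((\<lambda>u. sqrt (F u)) has_real_derivative F' / (2 * sqrt (F x))) (at x)"
proof -
  have "((\<lambda>u. sqrt (F u)) has_real_derivative (inverse (sqrt (F x)) / 2) * F') (at x)"
    by (rule DERIV_chain2[OF DERIV_real_sqrt[OF assms(2)] assms(1)])
  moreover have "(inverse (sqrt (F x)) / 2) * F' = F' / (2 * sqrt (F x))" by (simp add: field_simps)
  ultimately show ?thesis by metis
qed

lemma test_deriv:
  fixes G :: "real \<Rightarrow> real"
  assumes G: "(G has_real_derivative g) (at x)" and p1: "x^2 + (G x)^2 > 0" and p2: "(x - t)^2 + (G x - c)^2 > 0"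
  shows "((\<lambda>u. sqrt (u^2 + (G u)^2) - R - sqrt ((u - t)^2 + (G u - c)^2)) has_real_derivative
     ((x + G x * g) / sqrt (x^2 + (G x)^2) - ((x - t) + (G x - c) * g) / sqrt ((x - t)^2 + (G x - c)^2))) (at x)"
proof -
  have d1: "((\<lambda>u. u^2 + (G u)^2) has_real_derivative 2 * (x + G x * g)) (at x)"
    apply (rule DERIV_cong)
     apply (intro derivative_eq_intros)
    apply (rule refl G)+
    apply simp done
  have d2: "((\<lambda>u. (u - t)^2 + (G u - c)^2) has_real_derivative 2 * ((x - t) + (G x - c) * g)) (at x)"
    apply (rule DERIV_cong)
     apply (intro derivative_eq_intros)
    apply (rule refl G)+
    apply (simp add: algebra_simps) done
  have "((\<lambda>u. sqrt (u^2 + (G u)^2) - R - sqrt ((u - t)^2 + (G u - c)^2)) has_real_derivative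
     (2 * (x + G x * g)) / (2 * sqrt (x^2 + (G x)^2)) - 0 - (2 * ((x - t) + (G x - c) * g)) / (2 * sqrt ((x - t)^2 + (G x - c)^2))) (at x)"
    by (intro DERIV_diff sqrt_deriv[OF d1 p1] sqrt_deriv[OF d2 p2] DERIV_const)
  moreover have "(2 * (x + G x * g)) / (2 * sqrt (x^2 + (G x)^2)) = (x + G x * g) / sqrt (x^2 + (G x)^2)"
    by (rule mult_divide_mult_cancel_left) simp
  moreover have "(2 * ((x - t) + (G x - c) * g)) / (2 * sqrt ((x - t)^2 + (G x - c)^2)) = ((x - t) + (G x - c) * g) / sqrt ((x - t)^2 + (G x - c)^2)"
    by (rule mult_divide_mult_cancel_left) simp
  ultimately show ?thesis by simp
qed

lemma paramC:
  assumes adm: "admissible R f" and R: "R > 0"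
    and EG: "equidistant_set (disk R) (epigraph f) = graph G"
    and Gd: "(G has_real_derivative deriv G x) (at x)"
    and tD: "alpha f t < R" and px: "xpar R f t = x" and py: "ypar R f t = G x"
  shows "hfun R G x = t"
proof -
  define d where "d = deriv f t"
  define w where "w = sqrt (1 + d^2)"
  define s where "s = (t^2 + (f t)^2 - R^2) / (2 * (R - alpha f t))"
  define g where "g = deriv G x"
  have wp: "w > 0" unfolding w_def by (simp add: add_pos_nonneg)
  have w2: "w^2 = 1 + d^2" unfolding w_def by simp
  have dp: "1 + d^2 > 0" by (smt (verit) zero_le_power2)
  have sp: "s > 0" using paramA(1)[OF adm R tD] unfolding s_def .
  have xe: "x = t + s*d/w" using paramA(2)[OF adm R tD] px unfolding s_def d_def w_def by simp
  have ye: "G x = f t - s/w" using paramA(3)[OF adm R tD] py unfolding s_def d_def w_def by simp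
  have nN: "sqrt (x^2 + (G x)^2) = R + s"
    using paramA(4)[OF adm R tD] px py unfolding s_def by (simp add: norm_pair)
  define N where "N = R + s"
  have Np: "N > 0" unfolding N_def using R sp by simp
  have p1: "x^2 + (G x)^2 > 0" using nN Np unfolding N_def by (metis real_sqrt_gt_0_iff)
  have N2: "x^2 + (G x)^2 = N^2" using nN unfolding N_def by (metis real_sqrt_pow2 sum_power2_ge_zero)
  have e1: "x - t = s * d / w" "G x - f t = - (s / w)" using xe ye by simp_all
  have S2: "(x - t)^2 + (G x - f t)^2 = s^2"
  proof -
    have "(x - t)^2 + (G x - f t)^2 = s^2 * (1 + d^2) / w^2"
      unfolding e1 using wp by (simp add: field_simps power2_eq_square)
    also have "\<dots> = s^2" using w2 dp by simp
    finally show ?thesis .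
  qed
  have nS: "sqrt ((x - t)^2 + (G x - f t)^2) = s" using S2 sp by simp
  have p2: "(x - t)^2 + (G x - f t)^2 > 0" using S2 sp by simp
  define \<psi> where "\<psi> u = sqrt (u^2 + (G u)^2) - R - sqrt ((u - t)^2 + (G u - f t)^2)" for u
  have psix: "\<psi> x = 0" unfolding \<psi>_def nN nS by simp
  have psile: "\<psi> u \<le> \<psi> x" for u
  proof -
    have "(u, G u) \<in> equidistant_set (disk R) (epigraph f)" unfolding EG graph_def by auto
    then have eq: "infdist (u, G u) (disk R) = infdist (u, G u) (epigraph f)"
      unfolding equidistant_set_def by simp
    have "(0::real, 0::real) = 0" by (simp add: zero_prod_def)
    then have "norm (u, G u) - R \<le> infdist (u, G u) (disk R)"
      unfolding disk_def using infdist_cball_ge[of R "(u, G u)"] R by simp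
    moreover have "infdist (u, G u) (epigraph f) \<le> dist (u, G u) (t, f t)"
      by (rule infdist_le) (simp add: epigraph_def)
    ultimately have "norm (u, G u) - R - dist (u, G u) (t, f t) \<le> 0" using eq by simp
    then show ?thesis using psix unfolding \<psi>_def by (simp add: norm_pair dist_pair)
  qed
  have der: "(\<psi> has_real_derivative
     ((x + G x * g) / sqrt (x^2 + (G x)^2) - ((x - t) + (G x - f t) * g) / sqrt ((x - t)^2 + (G x - f t)^2))) (at x)"
    unfolding \<psi>_def g_def by (rule test_deriv[OF Gd p1 p2])
  have "(x + G x * g) / sqrt (x^2 + (G x)^2) - ((x - t) + (G x - f t) * g) / sqrt ((x - t)^2 + (G x - f t)^2) = 0"
    by (rule DERIV_local_max[OF der, of 1]) (use psile in auto)
  then have deq: "(x + G x * g) / N = ((x - t) + (G x - f t) * g) / s"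
    unfolding nN nS N_def by simp
  define a1 where "a1 = x / N"
  define a2 where "a2 = G x / N"
  define n1 where "n1 = d / w"
  define n2 where "n2 = - 1 / w"
  have h1: "a1 + g * a2 = n1 + g * n2"
  proof -
    have "a1 + g * a2 = (x + G x * g) / N" unfolding a1_def a2_def by (simp add: add_divide_distrib)
    also have "\<dots> = ((x - t) + (G x - f t) * g) / s" by (rule deq)
    also have "\<dots> = n1 + g * n2" unfolding e1 n1_def n2_def using sp wp by (simp add: field_simps)
    finally show ?thesis .
  qed
  have h2: "a1^2 + a2^2 = 1" unfolding a1_def a2_def using N2 Np by (simp add: field_simps power2_eq_square)
  have h3: "n1^2 + n2^2 = 1" unfolding n1_def n2_def using w2 wp dp by (simp add: field_simps power2_eq_square)
  have h4: "\<not> (a1 = n1 \<and> a2 = n2)"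
  proof
    assume "a1 = n1 \<and> a2 = n2"
    then have an: "a1 = n1" "a2 = n2" by simp_all
    have xa: "x = N * a1" "G x = N * a2" unfolding a1_def a2_def using Np by simp_all
    have "t = x - s * n1" using xe unfolding n1_def by simp
    also have "\<dots> = (N - s) * a1" using xa(1) an(1) by (simp add: algebra_simps)
    finally have ta: "t = R * a1" unfolding N_def by simp
    have "f t = G x + s * (- n2)" using ye unfolding n2_def by simp
    also have "\<dots> = (N - s) * a2" using xa(2) an(2) by (simp add: algebra_simps)
    finally have "f t = R * a2" unfolding N_def by simp
    note ta this
    then have "t^2 + (f t)^2 = R^2 * (a1^2 + a2^2)" by (simp add: power_mult_distrib algebra_simps)
    then have "t^2 + (f t)^2 = R^2" using h2 by simp
    then show False using adm unfolding admissible_def by (metis less_irrefl)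
  qed
  have rf: "n1 = (a1*(1 - g^2) + 2*g*a2) / (1 + g^2)" by (rule refl_alg[OF h2 h3 h1 h4])
  have "hfun R G x = x - (N - R) / N * ((x * (1 - g^2) + 2 * G x * g) / (1 + g^2))"
    unfolding hfun_def nN N_def g_def ..
  also have "(N - R) / N * ((x * (1 - g^2) + 2 * G x * g) / (1 + g^2)) = s * ((a1*(1 - g^2) + 2*g*a2) / (1 + g^2))"
  proof -
    have gp: "1 + g^2 \<noteq> 0" by (smt (verit) zero_le_power2)
    have "N - R = s" unfolding N_def by simp
    have X: "a1*(1 - g^2) + 2*g*a2 = (x * (1 - g^2) + 2 * G x * g) / N"
      unfolding a1_def a2_def using Np by (simp add: field_simps)
    show ?thesis unfolding X \<open>N - R = s\<close> by simp
  qed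
  also have "\<dots> = s * d / w" unfolding rf[symmetric] n1_def by simp
  finally show ?thesis using xe by simp
qed



lemma param_in_E:
  assumes "admissible R f" "R > 0" "alpha f t < R"
  shows "(xpar R f t, ypar R f t) \<in> equidistant_set (disk R) (epigraph f)"
  using paramA(5,6)[OF assms] unfolding equidistant_set_def by simp

theorem theorem9:
  fixes R :: real and G :: "real \<Rightarrow> real" and J :: "real set"
  assumes "R > 0"
    and "C2 G"
    and "\<forall>x. x\<^sup>2 + (G x)\<^sup>2 > 0"
    and "open J" and "is_interval J" and "0 \<in> J"
    and "bij_betw (hfun R G) UNIV J"
    and "\<forall>x. deriv (hfun R G) x \<noteq> 0"
  shows "equidistant_function R G \<longleftrightarrow>
    (\<exists>f. admissible R f \<and> Dom R f = J \<and>
       (\<forall>t\<in>J. inv (hfun R G) t = xpar R f t \<and> G (inv (hfun R G) t) = ypar R f t))"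
proof -
  let ?h = "hfun R G"
  note R = assms(1)
  have Gd: "(G has_real_derivative deriv G x) (at x)" for x
    using assms(2) unfolding C2_def by (simp add: DERIV_deriv_iff_real_differentiable)
  note bij = assms(7)
  have hJ: "?h x \<in> J" for x using bij bij_betwE by blast
  have hinv: "?h (inv ?h t) = t" if "t \<in> J" for t
    using bij that by (simp add: bij_betw_inv_into_right)
  have invh: "inv ?h (?h x) = x" for x
    using bij by (simp add: bij_betw_inv_into_left)
  show ?thesis
  proof
    assume "equidistant_function R G"
    then obtain f where adm: "admissible R f" and EG: "equidistant_set (disk R) (epigraph f) = graph G"
      unfolding equidistant_function_def by auto
    have fwd: "?h (xpar R f t) = t \<and> G (xpar R f t) = ypar R f t" if tD: "alpha f t < R" for t
    proof -
      have "(xpar R f t, ypar R f t) \<in> graph G" using param_in_E[OF adm R tD] EG by simp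
      then have gy: "G (xpar R f t) = ypar R f t" unfolding graph_def by auto
      have "?h (xpar R f t) = t" by (rule paramC[OF adm R EG Gd tD refl gy[symmetric]])
      then show ?thesis using gy by simp
    qed
    have "Dom R f = J"
    proof
      show "Dom R f \<subseteq> J"
      proof
        fix t assume "t \<in> Dom R f"
        then have "alpha f t < R" unfolding Dom_def by simp
        then have "?h (xpar R f t) = t" using fwd by simp
        then show "t \<in> J" using hJ by metis
      qed
      show "J \<subseteq> Dom R f"
      proof
        fix t assume tJ: "t \<in> J"
        define x where "x = inv ?h t"
        have hx: "?h x = t" unfolding x_def using hinv tJ by simp
        have "(x, G x) \<in> equidistant_set (disk R) (epigraph f)" unfolding EG graph_def by auto
        from paramB[OF adm R this] obtain t' where t': "alpha f t' < R" "(x, G x) = (xpar R f t', ypar R f t')"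
          by blast
        have e: "xpar R f t' = x" "ypar R f t' = G x" using t'(2) by auto
        have "?h x = t'" by (rule paramC[OF adm R EG Gd t'(1) e])
        then show "t \<in> Dom R f" using hx t'(1) unfolding Dom_def by simp
      qed
    qed
    moreover have "\<forall>t\<in>J. inv ?h t = xpar R f t \<and> G (inv ?h t) = ypar R f t"
    proof
      fix t assume "t \<in> J"
      then have "alpha f t < R" using \<open>Dom R f = J\<close> unfolding Dom_def by auto
      then have "?h (xpar R f t) = t" "G (xpar R f t) = ypar R f t" using fwd by auto
      then show "inv ?h t = xpar R f t \<and> G (inv ?h t) = ypar R f t" using invh by metis
    qed
    ultimately show "\<exists>f. admissible R f \<and> Dom R f = J \<and>
       (\<forall>t\<in>J. inv ?h t = xpar R f t \<and> G (inv ?h t) = ypar R f t)" using adm by blast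
  next
    assume "\<exists>f. admissible R f \<and> Dom R f = J \<and>
       (\<forall>t\<in>J. inv ?h t = xpar R f t \<and> G (inv ?h t) = ypar R f t)"
    then obtain f where adm: "admissible R f" and DJ: "Dom R f = J"
      and par: "\<forall>t\<in>J. inv ?h t = xpar R f t \<and> G (inv ?h t) = ypar R f t" by blast
    have "equidistant_set (disk R) (epigraph f) = graph G"
    proof
      show "equidistant_set (disk R) (epigraph f) \<subseteq> graph G"
      proof
        fix p assume "p \<in> equidistant_set (disk R) (epigraph f)"
        from paramB[OF adm R this] obtain t where t: "alpha f t < R" "p = (xpar R f t, ypar R f t)"
          by blast
        have "t \<in> J" using t(1) DJ unfolding Dom_def by auto
        then have "p = (inv ?h t, G (inv ?h t))" using par t(2) by metis
        then show "p \<in> graph G" unfolding graph_def by auto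
      qed
      show "graph G \<subseteq> equidistant_set (disk R) (epigraph f)"
      proof
        fix p assume "p \<in> graph G"
        then obtain x where p: "p = (x, G x)" unfolding graph_def by auto
        define t where "t = ?h x"
        have tJ: "t \<in> J" unfolding t_def by (rule hJ)
        have "inv ?h t = x" unfolding t_def by (rule invh)
        then have e: "xpar R f t = x" "ypar R f t = G x" using par tJ by auto
        have "alpha f t < R" using tJ DJ unfolding Dom_def by auto
        from param_in_E[OF adm R this] show "p \<in> equidistant_set (disk R) (epigraph f)"
          unfolding e p .
      qed
    qed
    then show "equidistant_function R G" unfolding equidistant_function_def using adm by blast
  qed
qed

end
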